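(* Let $\Phi$ be an atomic CSP and $\pi$ an admissible projection scheme. Let $(X_t,Y_t)_{t\ge0}$ be the optimal one-step coupling of two copies of the Glauber dynamics for $\mu_\pi$ with arbitrary initial states $X_0,Y_0$. If $(v,t)\in U\cap D$, then there exists a path $C^1,C^2,\dots,C^k$ in $G(\mathcal{C})$ such that: $v\in\mathrm{vbl}(C^1)$; each $C^i$ is not satisfied in at least one of $X_{t-1}^{-v}$ and $Y_{t-1}^{-v}$; and $\mathrm{vbl}(C^k)$ contains some $u\neq v$ with $X_{t-1}(u)\neq Y_{t-1}(u)$.
   Context: CSP notation: $\Phi=(V,(\Omega_v),\mathcal{C})$, constraints depending only on $\mathrm{vbl}(C)$; atomic: each $C$ has a unique violating assignment $\boldsymbol{C}\in\prod_{v\in\mathrm{vbl}(C)}\Omega_v$; degree $\Delta=\max_C|\{C':\mathrm{vbl}(C)\cap\mathrm{vbl}(C')\ne\emptyset\}|$; $\mu_\Phi$ uniform on satisfying assignments. Projection scheme $\pi_v:\Omega_v\to Q_v$ ($Q_v$ finite, nonempty); $\mathbb{P}_\pi,\mu_\pi$ pushforwards under $\pi$ of the uniform distribution on $\prod_v\Omega_v$ and of $\mu_\Phi$; $\boldsymbol{C}_\pi(v)=\pi_v(\boldsymbol{C}(v))$; $b(C)=\prod_{u\in\mathrm{vbl}(C)}|\pi_u^{-1}(\boldsymbol{C}_\pi(u))|^{-1}$, $b=\max_Cb(C)$; $q_{\mathrm{TV}}=\max_{v,Y}d_{\mathrm{TV}}(\mathbb{P}_\pi[\mathrm{value}(v)=\cdot],\mu_\pi[\mathrm{value}(v)=\cdot\mid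 Y^{-v}])$ where $Y^{-v}$ is $Y$ with coordinate $v$ removed and the conditioning is on the other coordinates; $\overline{\mathrm{vbl}}(C)=\{v\in\mathrm{vbl}(C):|Q_v|>1\}$; $\zeta(C)=\max\{1,\max_{v\in\overline{\mathrm{vbl}}(C)}\min(\frac{(1-3b)^\Delta q_{\mathrm{TV}}}{\mathbb{P}_\pi[\mathrm{value}(v)=\boldsymbol{C}_\pi(v)]},2\Delta)\}$. Admissible (parameter $\eta\in(0,1/2)$): (A1) $b\le\eta/(300\Delta)$; (A2) there is $\kappa\ge4\log(3000\Delta)$, $\kappa\le K(\log\Delta+\log\max|Q_v|+\log\max|\mathrm{vbl}(C)|)$ ($K$ universal) with $|\overline{\mathrm{vbl}}(C)|^2\kappa^2\zeta(C)\prod_{v\in\overline{\mathrm{vbl}}(C)}((1-3b)^{-\Delta}\mathbb{P}_\pi[\mathrm{value}(v)=\boldsymbol{C}_\pi(v)]+e^{-\kappa/3})\le(60000\Delta)^{-2}$ for all $C$; (A3) for $v\in\mathrm{vbl}(C)\cap\mathrm{vbl}(C')$, $\frac12\mathbb{P}_\pi[\mathrm{value}(v)=\boldsymbol{C}_\pi(v)]\le\mathbb{P}_\pi[\mathrm{value}(v)=\boldsymbol{C}'_\pi(v)]\le2\mathbb{P}_\pi[\mathrm{value}(v)=\boldsymbol{C}_\pi(v)]$; (A4) $\pi_v$ computable and fibres samplable in time $K\log|\Omega_v|$. $G(\mathcal{C})$ is the graph on $\mathcal{C}$ with $C\ne C'$ adjacent iff $\mathrm{vbl}(C)\cap\mathrm{vbl}(C')\ne\emptyset$;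 a path is a sequence of constraints with consecutive ones adjacent. A partial assignment $Z$ (defined on a subset of $V$) does not satisfy $C$ if $Z(w)=\boldsymbol{C}_\pi(w)$ for all $w\in\mathrm{vbl}(C)$ at which $Z$ is defined. The optimal one-step coupling: given $(X_{t-1},Y_{t-1})$, choose $v\in V$ uniformly at random ($v$ is "updated at time $t$"), set $X_t(w)=X_{t-1}(w)$, $Y_t(w)=Y_{t-1}(w)$ for $w\ne v$, and draw $(X_t(v),Y_t(v))$ from an optimal (total-variation-achieving) coupling of $\mu_\pi[\mathrm{value}(v)=\cdot\mid X_{t-1}^{-v}]$ and $\mu_\pi[\mathrm{value}(v)=\cdot\mid Y_{t-1}^{-v}]$. $U=\{(v,t): v\text{ is updated at time }t\}$ and $D=\{(v,t):X_t(v)\ne Y_t(v)\}$. *)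

theory Defs
  imports "HOL-Probability.Probability"
begin

text \<open>
  Atomic CSP: variables V, finite domains Om v, constraints Cs, each constraint C
  with variable set vbl C and a unique violating assignment viol C (on vbl C).
\<close>

definition atomic_csp ::
  "'v set \<Rightarrow> ('v \<Rightarrow> 'a set) \<Rightarrow> 'c set \<Rightarrow> ('c \<Rightarrow> 'v set) \<Rightarrow> ('c \<Rightarrow> 'v \<Rightarrow> 'a) \<Rightarrow> bool" where
  "atomic_csp V Om Cs vbl viol \<longleftrightarrow>
     finite V \<and> (\<forall>v\<in>V. finite (Om v) \<and> Om v \<noteq> {}) \<and> finite Cs \<and>
     (\<forall>C\<in>Cs. vbl C \<subseteq> V \<and> (\<forall>u\<in>vbl C. viol C u \<in> Om u))"

definition proj_scheme ::
  "'v set \<Rightarrow> ('v \<Rightarrow> 'a set) \<Rightarrow> ('v \<Rightarrow> 'a \<Rightarrow> 'q) \<Rightarrow> ('v \<Rightarrow> 'q set) \<Rightarrow> bool" where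
  "proj_scheme V Om prj Q \<longleftrightarrow>
     (\<forall>v\<in>V. finite (Q v) \<and> Q v \<noteq> {} \<and> prj v ` Om v \<subseteq> Q v)"

definition violates :: "('c \<Rightarrow> 'v set) \<Rightarrow> ('c \<Rightarrow> 'v \<Rightarrow> 'a) \<Rightarrow> 'c \<Rightarrow> ('v \<Rightarrow> 'a) \<Rightarrow> bool" where
  "violates vbl viol C \<sigma> \<longleftrightarrow> (\<forall>u\<in>vbl C. \<sigma> u = viol C u)"

definition sat_assignments ::
  "'v set \<Rightarrow> ('v \<Rightarrow> 'a set) \<Rightarrow> 'c set \<Rightarrow> ('c \<Rightarrow> 'v set) \<Rightarrow> ('c \<Rightarrow> 'v \<Rightarrow> 'a) \<Rightarrow> ('v \<Rightarrow> 'a) set" where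
  "sat_assignments V Om Cs vbl viol =
     {\<sigma> \<in> PiE V Om. \<forall>C\<in>Cs. \<not> violates vbl viol C \<sigma>}"

definition mu_Phi where
  "mu_Phi V Om Cs vbl viol = pmf_of_set (sat_assignments V Om Cs vbl viol)"

definition proj :: "'v set \<Rightarrow> ('v \<Rightarrow> 'a \<Rightarrow> 'q) \<Rightarrow> ('v \<Rightarrow> 'a) \<Rightarrow> ('v \<Rightarrow> 'q)" where
  "proj V prj \<sigma> = restrict (\<lambda>v. prj v (\<sigma> v)) V"

definition P_pi where
  "P_pi V Om prj = map_pmf (proj V prj) (pmf_of_set (PiE V Om))"

definition mu_pi where
  "mu_pi V Om Cs vbl viol prj = map_pmf (proj V prj) (mu_Phi V Om Cs vbl viol)"

definition agree_off :: "'v set \<Rightarrow> 'v \<Rightarrow> ('v \<Rightarrow> 'q) \<Rightarrow> ('v \<Rightarrow> 'q) set" where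
  "agree_off V v Y = {Z. \<forall>w\<in>V - {v}. Z w = Y w}"

text \<open>Conditional marginal mu[value(v) = . | Y^{-v}] (defined when the event has positive mass).\<close>
definition cond_marg :: "('v \<Rightarrow> 'q) pmf \<Rightarrow> 'v set \<Rightarrow> 'v \<Rightarrow> ('v \<Rightarrow> 'q) \<Rightarrow> 'q pmf" where
  "cond_marg mu V v Y = map_pmf (\<lambda>Z. Z v) (cond_pmf mu (agree_off V v Y))"

definition marg :: "('v \<Rightarrow> 'q) pmf \<Rightarrow> 'v \<Rightarrow> 'q pmf" where
  "marg mu v = map_pmf (\<lambda>Z. Z v) mu"

definition tvd :: "'b pmf \<Rightarrow> 'b pmf \<Rightarrow> real" where
  "tvd p q = (SUP A. \<bar>measure_pmf.prob p A - measure_pmf.prob q A\<bar>)"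

definition optimal_coupling :: "('b \<times> 'b) pmf \<Rightarrow> 'b pmf \<Rightarrow> 'b pmf \<Rightarrow> bool" where
  "optimal_coupling nu p q \<longleftrightarrow>
     map_pmf fst nu = p \<and> map_pmf snd nu = q \<and>
     measure_pmf.prob nu {(a, b). a \<noteq> b} = tvd p q"

definition degree :: "'c set \<Rightarrow> ('c \<Rightarrow> 'v set) \<Rightarrow> nat" where
  "degree Cs vbl = Max (insert 0 ((\<lambda>C. card {C'\<in>Cs. vbl C \<inter> vbl C' \<noteq> {}}) ` Cs))"

definition bC where
  "bC Om vbl viol prj C = (\<Prod>u\<in>vbl C. 1 / real (card {x\<in>Om u. prj u x = prj u (viol C u)}))"

definition bmax where
  "bmax Om Cs vbl viol prj = Max (insert 0 (bC Om vbl viol prj ` Cs))"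

definition pC where
  "pC V Om viol prj v C = pmf (marg (P_pi V Om prj) v) (prj v (viol C v))"

definition qTV where
  "qTV V Om Cs vbl viol prj Q = Max (insert 0
     {tvd (marg (P_pi V Om prj) v) (cond_marg (mu_pi V Om Cs vbl viol prj) V v Y) | v Y.
        v \<in> V \<and> Y \<in> PiE V Q \<and>
        measure_pmf.prob (mu_pi V Om Cs vbl viol prj) (agree_off V v Y) > 0})"

definition vblbar where
  "vblbar vbl Q C = {v \<in> vbl C. card (Q v) > 1}"

definition zeta where
  "zeta V Om Cs vbl viol prj Q C =
     (let b = bmax Om Cs vbl viol prj; D = degree Cs vbl in
      Max (insert 1 ((\<lambda>v. min ((1 - 3*b)^D * qTV V Om Cs vbl viol prj Q / pC V Om viol prj v C)
                              (2 * real D)) ` vblbar vbl Q C)))"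

text \<open>Admissibility with parameter eta, relative to the universal constant K
  (condition (A4) on computability is not formalized).\<close>
definition admissible where
  "admissible K eta V Om Cs vbl viol prj Q \<longleftrightarrow>
     (let b = bmax Om Cs vbl viol prj; D = real (degree Cs vbl) in
      0 < eta \<and> eta < 1/2 \<and>
      b \<le> eta / (300 * D) \<and>
      (\<exists>\<kappa>::real. \<kappa> \<ge> 4 * ln (3000 * D) \<and>
         \<kappa> \<le> K * (ln D + ln (real (Max (insert 0 ((\<lambda>v. card (Q v)) ` V))))
                    + ln (real (Max (insert 0 ((\<lambda>C. card (vbl C)) ` Cs))))) \<and>
         (\<forall>C\<in>Cs. real (card (vblbar vbl Q C))^2 * \<kappa>^2 * zeta V Om Cs vbl viol prj Q C *
             (\<Prod>v\<in>vblbar vbl Q C. inverse ((1 - 3*b) ^ degree Cs vbl) * pC V Om viol prj v C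
                                    + exp (-\<kappa>/3))
           \<le> inverse ((60000 * D)^2))) \<and>
      (\<forall>C\<in>Cs. \<forall>C'\<in>Cs. \<forall>v\<in>vbl C \<inter> vbl C'.
         pC V Om viol prj v C / 2 \<le> pC V Om viol prj v C' \<and>
         pC V Om viol prj v C' \<le> 2 * pC V Om viol prj v C))"

text \<open>Paths in the dependency graph G(Cs).\<close>
definition is_path :: "'c set \<Rightarrow> ('c \<Rightarrow> 'v set) \<Rightarrow> 'c list \<Rightarrow> bool" where
  "is_path Cs vbl cs \<longleftrightarrow> cs \<noteq> [] \<and> set cs \<subseteq> Cs \<and>
     (\<forall>i. Suc i < length cs \<longrightarrow> cs ! i \<noteq> cs ! Suc i \<and> vbl (cs ! i) \<inter> vbl (cs ! Suc i) \<noteq> {})"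

text \<open>The partial assignment Y^{-v} (Y restricted to V - {v}) does not satisfy C.\<close>
definition not_sat_off where
  "not_sat_off vbl viol prj v Y C \<longleftrightarrow> (\<forall>w\<in>vbl C - {v}. Y w = prj w (viol C w))"

end

theory Submission
  imports Defs
begin

lemma cond_pmf_of_set_eq:
  assumes "finite S" "S \<inter> E \<noteq> {}"
  shows "cond_pmf (pmf_of_set S) E = pmf_of_set (S \<inter> E)"
proof (rule pmf_eqI)
  fix x
  have ne: "S \<noteq> {}" using assms by auto
  have nz: "set_pmf (pmf_of_set S) \<inter> E \<noteq> {}" using assms ne by simp
  have cs: "card (S \<inter> E) > 0" using assms by (simp add: card_gt_0_iff)
  have cS: "card S > 0" using assms ne by (simp add: card_gt_0_iff)
  show "pmf (cond_pmf (pmf_of_set S) E) x = pmf (pmf_of_set (S \<inter> E)) x"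
    using assms ne cs cS
    by (simp add: pmf_cond[OF nz] measure_pmf_of_set indicator_def Int_commute)
qed

lemma pmf_of_set_times:
  assumes "finite A" "finite B" "A \<noteq> {}" "B \<noteq> {}"
  shows "pmf_of_set (A \<times> B) = pair_pmf (pmf_of_set A) (pmf_of_set B)"
proof (rule pmf_eqI)
  fix x :: "'a \<times> 'b"
  show "pmf (pmf_of_set (A \<times> B)) x = pmf (pair_pmf (pmf_of_set A) (pmf_of_set B)) x"
    using assms by (cases x) (simp add: pmf_pair card_cartesian_product indicator_def)
qed

lemma cond_marg_factor:
  assumes csp: "atomic_csp V Om Cs vbl viol"
    and v: "v \<in> V"
    and sat: "sat_assignments V Om Cs vbl viol \<noteq> {}"
    and pos: "measure_pmf.prob (mu_pi V Om Cs vbl viol prj) (agree_off V v Z) > 0"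
    and RCs: "R \<subseteq> Cs"
    and start: "\<And>C. C \<in> Cs \<Longrightarrow> v \<in> vbl C \<Longrightarrow> not_sat_off vbl viol prj v Z C \<Longrightarrow> C \<in> R"
    and clos: "\<And>C C'. C \<in> R \<Longrightarrow> C' \<in> Cs \<Longrightarrow> not_sat_off vbl viol prj v Z C'
                 \<Longrightarrow> vbl C \<inter> vbl C' \<noteq> {} \<Longrightarrow> C' \<in> R"
  shows "cond_marg (mu_pi V Om Cs vbl viol prj) V v Z =
     map_pmf (\<lambda>\<tau>. prj v (\<tau> v)) (pmf_of_set
        {\<tau> \<in> PiE (insert v (\<Union>(vbl ` R))) Om.
           (\<forall>w\<in>insert v (\<Union>(vbl ` R)) - {v}. prj w (\<tau> w) = Z w) \<and>
           (\<forall>C\<in>R. \<not> violates vbl viol C \<tau>)})"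
proof -
  define W where "W = insert v (\<Union>(vbl ` R))"
  define B where "B = {\<tau> \<in> PiE W Om. (\<forall>w\<in>W - {v}. prj w (\<tau> w) = Z w) \<and>
           (\<forall>C\<in>R. \<not> violates vbl viol C \<tau>)}"
  define U where "U = V - W"
  define Cc where "Cc = {\<rho> \<in> PiE U Om. (\<forall>w\<in>U. prj w (\<rho> w) = Z w) \<and>
           (\<forall>C\<in>Cs. vbl C \<subseteq> U \<longrightarrow> \<not> violates vbl viol C \<rho>)}"
  define mrg where "mrg = (\<lambda>(\<tau>::'a \<Rightarrow> 'b, \<rho>::'a \<Rightarrow> 'b). \<lambda>w. if w \<in> W then \<tau> w else \<rho> w)"
  define S where "S = sat_assignments V Om Cs vbl viol"
  define A where "A = {\<sigma>\<in>S. \<forall>w\<in>V-{v}. prj w (\<sigma> w) = Z w}"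
  have vblV: "\<And>C. C \<in> Cs \<Longrightarrow> vbl C \<subseteq> V" using csp by (auto simp: atomic_csp_def)
  have WV: "W \<subseteq> V" using vblV RCs v by (auto simp: W_def)
  have vW: "v \<in> W" by (simp add: W_def)
  have SPi: "S \<subseteq> PiE V Om" by (auto simp: S_def sat_assignments_def)
  have finS: "finite S"
  proof (rule finite_subset[OF SPi])
    show "finite (PiE V Om)" using csp by (intro finite_PiE) (auto simp: atomic_csp_def)
  qed
  have pre: "proj V prj -` agree_off V v Z = {\<sigma>. \<forall>w\<in>V-{v}. prj w (\<sigma> w) = Z w}"
    by (auto simp: proj_def agree_off_def)
  have Sne: "S \<noteq> {}" using sat by (simp add: S_def)
  have AS: "A = S \<inter> proj V prj -` agree_off V v Z" by (auto simp: A_def pre)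
  have Ane: "A \<noteq> {}"
  proof
    assume "A = {}"
    then have "measure_pmf.prob (mu_pi V Om Cs vbl viol prj) (agree_off V v Z) = 0"
      unfolding mu_pi_def mu_Phi_def measure_map_pmf
      by (subst measure_pmf_zero_iff) (use AS finS Sne in \<open>auto simp: S_def[symmetric]\<close>)
    with pos show False by simp
  qed
  have step3: "cond_marg (mu_pi V Om Cs vbl viol prj) V v Z = map_pmf (\<lambda>\<sigma>. prj v (\<sigma> v)) (pmf_of_set A)"
  proof -
    have "cond_pmf (mu_pi V Om Cs vbl viol prj) (agree_off V v Z) =
          map_pmf (proj V prj) (cond_pmf (pmf_of_set S) (proj V prj -` agree_off V v Z))"
      unfolding mu_pi_def mu_Phi_def S_def[symmetric]
      by (rule cond_map_pmf) (use finS Sne Ane AS in auto)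
    also have "\<dots> = map_pmf (proj V prj) (pmf_of_set A)"
      using cond_pmf_of_set_eq[OF finS, of "proj V prj -` agree_off V v Z"] Ane AS by simp
    finally show ?thesis
      unfolding cond_marg_def by (simp add: map_pmf_comp proj_def v)
  qed
  have UV: "U \<subseteq> V" by (auto simp: U_def)
  have finPi: "\<And>X. X \<subseteq> V \<Longrightarrow> finite (PiE X Om)"
    using csp by (intro finite_PiE) (auto simp: atomic_csp_def intro: finite_subset)
  have finB: "finite B" using finPi[OF WV] by (auto simp: B_def intro: finite_subset)
  have finC: "finite Cc" using finPi[OF UV] by (auto simp: Cc_def intro: finite_subset)
  have viol_eq: "\<And>C f g. (\<And>u. u \<in> vbl C \<Longrightarrow> f u = g u) \<Longrightarrow> violates vbl viol C f = violates vbl viol C g"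
    by (auto simp: violates_def)
  have RW: "\<And>C. C \<in> R \<Longrightarrow> vbl C \<subseteq> W" by (auto simp: W_def)
  have sub1: "A \<subseteq> mrg ` (B \<times> Cc)"
  proof
    fix \<sigma> assume sA: "\<sigma> \<in> A"
    then have sPi: "\<sigma> \<in> PiE V Om" and sfib: "\<forall>w\<in>V-{v}. prj w (\<sigma> w) = Z w"
      and ssat: "\<forall>C\<in>Cs. \<not> violates vbl viol C \<sigma>"
      by (auto simp: A_def S_def sat_assignments_def)
    have "restrict \<sigma> W \<in> B"
    proof -
      have "\<forall>C\<in>R. \<not> violates vbl viol C (restrict \<sigma> W)"
      proof
        fix C assume CR: "C \<in> R"
        have "violates vbl viol C (restrict \<sigma> W) = violates vbl viol C \<sigma>"
          by (rule viol_eq) (use RW[OF CR] in auto)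
        then show "\<not> violates vbl viol C (restrict \<sigma> W)" using ssat CR RCs by auto
      qed
      then show ?thesis using sPi sfib WV by (auto simp: B_def)
    qed
    moreover have "restrict \<sigma> U \<in> Cc"
    proof -
      have "\<forall>C\<in>Cs. vbl C \<subseteq> U \<longrightarrow> \<not> violates vbl viol C (restrict \<sigma> U)"
      proof (intro ballI impI)
        fix C assume CC: "C \<in> Cs" and CU: "vbl C \<subseteq> U"
        have "violates vbl viol C (restrict \<sigma> U) = violates vbl viol C \<sigma>"
          by (rule viol_eq) (use CU in auto)
        then show "\<not> violates vbl viol C (restrict \<sigma> U)" using ssat CC by auto
      qed
      then show ?thesis using sPi sfib vW by (auto simp: Cc_def U_def)
    qed
    moreover have "\<sigma> = mrg (restrict \<sigma> W, restrict \<sigma> U)"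
    proof
      fix w show "\<sigma> w = mrg (restrict \<sigma> W, restrict \<sigma> U) w"
        using sPi by (cases "w \<in> V") (auto simp: mrg_def U_def PiE_def extensional_def)
    qed
    ultimately show "\<sigma> \<in> mrg ` (B \<times> Cc)" by blast
  qed
  have sub2: "mrg ` (B \<times> Cc) \<subseteq> A"
  proof
    fix \<sigma> assume "\<sigma> \<in> mrg ` (B \<times> Cc)"
    then obtain \<tau> \<rho> where tB: "\<tau> \<in> B" and rC: "\<rho> \<in> Cc" and sd: "\<sigma> = mrg (\<tau>, \<rho>)" by auto
    have tPi: "\<tau> \<in> PiE W Om" and tfib: "\<forall>w\<in>W - {v}. prj w (\<tau> w) = Z w"
      and tsat: "\<forall>C\<in>R. \<not> violates vbl viol C \<tau>" using tB by (auto simp: B_def)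
    have rPi: "\<rho> \<in> PiE U Om" and rfib: "\<forall>w\<in>U. prj w (\<rho> w) = Z w"
      and rsat: "\<forall>C\<in>Cs. vbl C \<subseteq> U \<longrightarrow> \<not> violates vbl viol C \<rho>" using rC by (auto simp: Cc_def)
    have sw: "\<And>w. \<sigma> w = (if w \<in> W then \<tau> w else \<rho> w)" by (simp add: sd mrg_def)
    have sPi: "\<sigma> \<in> PiE V Om"
    proof (rule PiE_I)
      fix w assume "w \<in> V" then show "\<sigma> w \<in> Om w"
        using tPi rPi by (cases "w \<in> W") (auto simp: sw U_def)
    next
      fix w assume "w \<notin> V" then show "\<sigma> w = undefined"
        using rPi WV by (auto simp: sw U_def PiE_def extensional_def)
    qed
    have sfib: "\<forall>w\<in>V-{v}. prj w (\<sigma> w) = Z w"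
      using tfib rfib by (auto simp: sw U_def)
    have ssat: "\<forall>C\<in>Cs. \<not> violates vbl viol C \<sigma>"
    proof
      fix C assume CC: "C \<in> Cs"
      show "\<not> violates vbl viol C \<sigma>"
      proof (cases "C \<in> R")
        case True
        have "violates vbl viol C \<sigma> = violates vbl viol C \<tau>"
          by (rule viol_eq) (use RW[OF True] in \<open>auto simp: sw\<close>)
        then show ?thesis using tsat True by auto
      next
        case notR: False
        show ?thesis
        proof (cases "vbl C \<subseteq> U")
          case True
          have "violates vbl viol C \<sigma> = violates vbl viol C \<rho>"
            by (rule viol_eq) (use True in \<open>auto simp: sw U_def\<close>)
          then show ?thesis using rsat True CC by auto
        next
          case False
          then obtain w where wC: "w \<in> vbl C" and wW: "w \<in> W" using vblV[OF CC] by (auto simp: U_def)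
          have nb: "\<not> not_sat_off vbl viol prj v Z C"
          proof
            assume bad: "not_sat_off vbl viol prj v Z C"
            show False
            proof (cases "v \<in> vbl C")
              case True then show False using start[OF CC True bad] notR by simp
            next
              case False
              then have "w \<noteq> v" using wC by auto
              then obtain C0 where C0: "C0 \<in> R" "w \<in> vbl C0" using wW by (auto simp: W_def)
              then show False using clos[OF C0(1) CC bad] wC notR by auto
            qed
          qed
          then obtain w' where w': "w' \<in> vbl C" "w' \<noteq> v" "Z w' \<noteq> prj w' (viol C w')"
            by (auto simp: not_sat_off_def)
          have "w' \<in> V" using w' vblV[OF CC] by auto
          then have "prj w' (\<sigma> w') = Z w'" using sfib w' by auto
          then have "\<sigma> w' \<noteq> viol C w'" using w' by auto
          then show ?thesis using w' by (auto simp: violates_def)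
        qed
      qed
    qed
    show "\<sigma> \<in> A" using sPi sfib ssat by (auto simp: A_def S_def sat_assignments_def)
  qed
  have Aeq: "A = mrg ` (B \<times> Cc)" using sub1 sub2 by blast
  have inj: "inj_on mrg (B \<times> Cc)"
  proof (rule inj_onI)
    fix x y assume x: "x \<in> B \<times> Cc" and y: "y \<in> B \<times> Cc" and e: "mrg x = mrg y"
    obtain t1 r1 where x1: "x = (t1, r1)" by (cases x)
    obtain t2 r2 where y1: "y = (t2, r2)" by (cases y)
    have t: "t1 \<in> PiE W Om" "t2 \<in> PiE W Om" "r1 \<in> PiE U Om" "r2 \<in> PiE U Om"
      using x y x1 y1 by (auto simp: B_def Cc_def)
    have "t1 = t2"
    proof
      fix w show "t1 w = t2 w"
      proof (cases "w \<in> W")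
        case True then show ?thesis using fun_cong[OF e, of w] x1 y1 by (simp add: mrg_def)
      next
        case False then show ?thesis using t by (auto simp: PiE_def extensional_def)
      qed
    qed
    moreover have "r1 = r2"
    proof
      fix w show "r1 w = r2 w"
      proof (cases "w \<in> W")
        case False then show ?thesis using fun_cong[OF e, of w] x1 y1 by (simp add: mrg_def)
      next
        case True then have "w \<notin> U" by (simp add: U_def)
        then show ?thesis using t by (auto simp: PiE_def extensional_def)
      qed
    qed
    ultimately show "x = y" using x1 y1 by simp
  qed
  have BCne: "B \<times> Cc \<noteq> {}" using Ane Aeq by auto
  then have Bne: "B \<noteq> {}" and Cne: "Cc \<noteq> {}" by auto
  have "map_pmf (\<lambda>\<sigma>. prj v (\<sigma> v)) (pmf_of_set A)
       = map_pmf (\<lambda>\<sigma>. prj v (\<sigma> v)) (map_pmf mrg (pmf_of_set (B \<times> Cc)))"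
    using map_pmf_of_set_inj[OF inj BCne] finB finC Aeq by simp
  also have "\<dots> = map_pmf (\<lambda>\<sigma>. prj v (\<sigma> v)) (map_pmf mrg (pair_pmf (pmf_of_set B) (pmf_of_set Cc)))"
    using pmf_of_set_times[OF finB finC Bne Cne] by simp
  also have "\<dots> = map_pmf ((\<lambda>\<tau>. prj v (\<tau> v)) \<circ> fst) (pair_pmf (pmf_of_set B) (pmf_of_set Cc))"
    by (simp add: map_pmf_comp mrg_def vW case_prod_beta comp_def)
  also have "\<dots> = map_pmf (\<lambda>\<tau>. prj v (\<tau> v)) (pmf_of_set B)"
  proof -
    have "map_pmf (\<lambda>\<tau>. prj v (\<tau> v)) (map_pmf fst (pair_pmf (pmf_of_set B) (pmf_of_set Cc)))
        = map_pmf ((\<lambda>\<tau>. prj v (\<tau> v)) \<circ> fst) (pair_pmf (pmf_of_set B) (pmf_of_set Cc))"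
      by (simp add: map_pmf_comp comp_def)
    then show ?thesis by (simp only: map_fst_pair_pmf)
  qed
  finally show ?thesis using step3 by (simp add: B_def W_def)
qed

theorem lemma5p4:
  fixes V :: "'v set" and Om :: "'v \<Rightarrow> 'a set" and Cs :: "'c set"
    and vbl :: "'c \<Rightarrow> 'v set" and viol :: "'c \<Rightarrow> 'v \<Rightarrow> 'a"
    and prj :: "'v \<Rightarrow> 'a \<Rightarrow> 'q" and Q :: "'v \<Rightarrow> 'q set"
    and K eta :: real
    and X Y :: "'v \<Rightarrow> 'q" and v :: 'v and nu :: "('q \<times> 'q) pmf" and a b :: 'q
  assumes csp: "atomic_csp V Om Cs vbl viol"
    and satisfiable: "sat_assignments V Om Cs vbl viol \<noteq> {}"
    and scheme: "proj_scheme V Om prj Q"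
    and adm: "admissible K eta V Om Cs vbl viol prj Q"
    and X: "X \<in> PiE V Q" and Y: "Y \<in> PiE V Q"
    and v: "v \<in> V"
    and posX: "measure_pmf.prob (mu_pi V Om Cs vbl viol prj) (agree_off V v X) > 0"
    and posY: "measure_pmf.prob (mu_pi V Om Cs vbl viol prj) (agree_off V v Y) > 0"
    and coupling: "optimal_coupling nu
                     (cond_marg (mu_pi V Om Cs vbl viol prj) V v X)
                     (cond_marg (mu_pi V Om Cs vbl viol prj) V v Y)"
    and outcome: "(a, b) \<in> set_pmf nu"
    and disagree: "a \<noteq> b"
  shows "\<exists>cs. is_path Cs vbl cs \<and> v \<in> vbl (hd cs) \<and>
           (\<forall>C\<in>set cs. not_sat_off vbl viol prj v X C \<or> not_sat_off vbl viol prj v Y C) \<and>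
           (\<exists>u\<in>vbl (last cs). u \<noteq> v \<and> X u \<noteq> Y u)"
proof (rule ccontr)
  assume nopath: "\<not> ?thesis"
  define bad where "bad = (\<lambda>C. not_sat_off vbl viol prj v X C \<or> not_sat_off vbl viol prj v Y C)"
  define R where "R = {C. \<exists>cs. is_path Cs vbl cs \<and> v \<in> vbl (hd cs) \<and> (\<forall>C\<in>set cs. bad C) \<and> last cs = C}"
  have RCs: "R \<subseteq> Cs" by (auto simp: R_def is_path_def)
  have Rbad: "\<And>C u. C \<in> R \<Longrightarrow> u \<in> vbl C \<Longrightarrow> u \<noteq> v \<Longrightarrow> X u = Y u"
    using nopath by (auto simp: R_def bad_def)
  have start: "\<And>C. C \<in> Cs \<Longrightarrow> v \<in> vbl C \<Longrightarrow> bad C \<Longrightarrow> C \<in> R"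
  proof -
    fix C assume "C \<in> Cs" "v \<in> vbl C" "bad C"
    then show "C \<in> R" unfolding R_def
      by (intro CollectI exI[of _ "[C]"]) (auto simp: is_path_def)
  qed
  have clos: "\<And>C C'. C \<in> R \<Longrightarrow> C' \<in> Cs \<Longrightarrow> bad C' \<Longrightarrow> vbl C \<inter> vbl C' \<noteq> {} \<Longrightarrow> C' \<in> R"
  proof -
    fix C C' assume CR: "C \<in> R" and C'C: "C' \<in> Cs" and bC: "bad C'" and int: "vbl C \<inter> vbl C' \<noteq> {}"
    show "C' \<in> R"
    proof (cases "C' = C")
      case True then show ?thesis using CR by simp
    next
      case neq: False
      obtain cs where cs: "is_path Cs vbl cs" "v \<in> vbl (hd cs)" "\<forall>C\<in>set cs. bad C" "last cs = C"
        using CR by (auto simp: R_def)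
      have ne: "cs \<noteq> []" using cs by (simp add: is_path_def)
      have st: "set (cs @ [C']) \<subseteq> Cs" using cs C'C by (auto simp: is_path_def)
      have adj: "\<forall>i. Suc i < length (cs @ [C']) \<longrightarrow> (cs @ [C']) ! i \<noteq> (cs @ [C']) ! Suc i \<and> vbl ((cs @ [C']) ! i) \<inter> vbl ((cs @ [C']) ! Suc i) \<noteq> {}"
      proof (intro allI impI)
        fix i assume i: "Suc i < length (cs @ [C'])"
        show "(cs @ [C']) ! i \<noteq> (cs @ [C']) ! Suc i \<and> vbl ((cs @ [C']) ! i) \<inter> vbl ((cs @ [C']) ! Suc i) \<noteq> {}"
        proof (cases "Suc i < length cs")
          case True then show ?thesis using cs(1) by (simp add: is_path_def nth_append)
        next
          case False
          then have ii: "i = length cs - 1" using i by simp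
          have "cs ! i = C" using cs(4) ne ii by (simp add: last_conv_nth)
          then show ?thesis using ii ne neq int by (simp add: nth_append)
        qed
      qed
      have "is_path Cs vbl (cs @ [C'])" unfolding is_path_def using st adj by simp
      then show ?thesis unfolding R_def using cs ne bC
        by (intro CollectI exI[of _ "cs @ [C']"]) auto
    qed
  qed
  define W where "W = insert v (\<Union>(vbl ` R))"
  have eqX: "cond_marg (mu_pi V Om Cs vbl viol prj) V v X =
     map_pmf (\<lambda>\<tau>. prj v (\<tau> v)) (pmf_of_set
        {\<tau> \<in> PiE W Om. (\<forall>w\<in>W - {v}. prj w (\<tau> w) = X w) \<and> (\<forall>C\<in>R. \<not> violates vbl viol C \<tau>)})"
    unfolding W_def
    by (rule cond_marg_factor[OF csp v satisfiable posX RCs])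
       (auto intro: start clos simp: bad_def)
  have eqY: "cond_marg (mu_pi V Om Cs vbl viol prj) V v Y =
     map_pmf (\<lambda>\<tau>. prj v (\<tau> v)) (pmf_of_set
        {\<tau> \<in> PiE W Om. (\<forall>w\<in>W - {v}. prj w (\<tau> w) = Y w) \<and> (\<forall>C\<in>R. \<not> violates vbl viol C \<tau>)})"
    unfolding W_def
    by (rule cond_marg_factor[OF csp v satisfiable posY RCs])
       (auto intro: start clos simp: bad_def)
  have XYW: "\<forall>w\<in>W - {v}. X w = Y w" using Rbad by (auto simp: W_def)
  have "{\<tau> \<in> PiE W Om. (\<forall>w\<in>W - {v}. prj w (\<tau> w) = X w) \<and> (\<forall>C\<in>R. \<not> violates vbl viol C \<tau>)}
      = {\<tau> \<in> PiE W Om. (\<forall>w\<in>W - {v}. prj w (\<tau> w) = Y w) \<and> (\<forall>C\<in>R. \<not> violates vbl viol C \<tau>)}"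
    using XYW by auto
  then have same: "cond_marg (mu_pi V Om Cs vbl viol prj) V v X = cond_marg (mu_pi V Om Cs vbl viol prj) V v Y"
    using eqX eqY by simp
  have "tvd (cond_marg (mu_pi V Om Cs vbl viol prj) V v X) (cond_marg (mu_pi V Om Cs vbl viol prj) V v Y) = 0"
    unfolding same tvd_def by simp
  then have "measure_pmf.prob nu {(a, b). a \<noteq> b} = 0"
    using coupling by (simp add: optimal_coupling_def)
  then have "set_pmf nu \<inter> {(a, b). a \<noteq> b} = {}" by (simp add: measure_pmf_zero_iff)
  then show False using outcome disagree by auto
qed

end
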